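(* Let $n,N\ge 1$, let $A_0,\dots,A_N\in\mathbb{C}^{n\times n}$, $u_0\in\mathbb{C}^n$, and let $c_0(t),c_1(t),\dots$ be the Taylor coefficients in $\varepsilon$ of $u(t,\varepsilon)=\exp(tA(\varepsilon))u_0$. Then for every integer $m\ge 1$ and every $t\in\mathbb{R}$, $$\mathrm{vec}(c_0(t),\dots,c_{m-1}(t))=\exp(tL_m)\,\widetilde u_0,\qquad \widetilde u_0:=\begin{bmatrix}u_0\\0\\\vdots\\0\end{bmatrix}\in\mathbb{C}^{mn}.$$ Equivalently, the vector $\mathrm{vec}(c_0(t),\dots,c_{m-1}(t))$ solves the linear ODE $\frac{d}{dt}v=L_mv$, $v(0)=\widetilde u_0$.
   Context: $A(\varepsilon):=A_0+\varepsilon A_1+\cdots+\varepsilon^NA_N$. Since $\varepsilon\mapsto\exp(tA(\varepsilon))u_0$ is entire, write $u(t,\varepsilon)=\exp(tA(\varepsilon))u_0=\sum_{\ell=0}^\infty\varepsilon^\ell c_\ell(t)$ with $c_\ell(t)\in\mathbb{C}^n$. For vectors $x_1,\dots,x_k\in\mathbb{C}^n$, $\mathrm{vec}(x_1,\dots,x_k)$ denotes the stacked vector $[x_1^T,\dots,x_k^T]^T\in\mathbb{C}^{nk}$. For $m\ge1$, $L_m\in\mathbb{C}^{mn\times mn}$ is the lower block-triangular block-Toeplitz matrix with $n\times n$ blocks whose $(r,s)$ block ($1\le r,s\le m$) equals $A_{r-s}$ if $0\le r-s\le \min(m-1,N)$ and $0$ otherwise; equivalently $L_m=\sum_{i=0}^{\min(m-1,N)}S_m^i\otimes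 A_i$ with $S_m=\sum_{\ell=1}^{m-1}e_{\ell+1}e_\ell^T\in\mathbb{R}^{m\times m}$. *)

theory Defs
  imports "HOL-Analysis.Derivative" "Jordan_Normal_Form.Matrix"
begin

definition mat_exp :: "complex mat \<Rightarrow> complex mat" where
  "mat_exp M = mat (dim_row M) (dim_col M)
     (\<lambda>(i,j). \<Sum>k. (M ^\<^sub>m k) $$ (i,j) / of_nat (fact k))"

definition Apoly :: "nat \<Rightarrow> nat \<Rightarrow> (nat \<Rightarrow> complex mat) \<Rightarrow> complex \<Rightarrow> complex mat" where
  "Apoly n N A eps = mat n n (\<lambda>(i,j). \<Sum>k\<le>N. eps ^ k * A k $$ (i,j))"

definition u_sol :: "nat \<Rightarrow> nat \<Rightarrow> (nat \<Rightarrow> complex mat) \<Rightarrow> complex vec \<Rightarrow> real \<Rightarrow> complex \<Rightarrow> complex vec" where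
  "u_sol n N A u0 t eps = mat_exp (complex_of_real t \<cdot>\<^sub>m Apoly n N A eps) *\<^sub>v u0"

definition taylor_coeff :: "(complex \<Rightarrow> complex) \<Rightarrow> nat \<Rightarrow> complex" where
  "taylor_coeff f l = (deriv ^^ l) f 0 / of_nat (fact l)"

definition c_coeff :: "nat \<Rightarrow> nat \<Rightarrow> (nat \<Rightarrow> complex mat) \<Rightarrow> complex vec \<Rightarrow> nat \<Rightarrow> real \<Rightarrow> complex vec" where
  "c_coeff n N A u0 l t = vec n (\<lambda>j. taylor_coeff (\<lambda>eps. u_sol n N A u0 t eps $ j) l)"

definition stack_vec :: "nat \<Rightarrow> nat \<Rightarrow> (nat \<Rightarrow> complex vec) \<Rightarrow> complex vec" where
  "stack_vec m n x = vec (m * n) (\<lambda>i. x (i div n) $ (i mod n))"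

definition L_mat :: "nat \<Rightarrow> nat \<Rightarrow> nat \<Rightarrow> (nat \<Rightarrow> complex mat) \<Rightarrow> complex mat" where
  "L_mat m n N A = mat (m * n) (m * n) (\<lambda>(i,j).
     (let r = i div n; s = j div n in
       if s \<le> r \<and> r - s \<le> min (m - 1) N then A (r - s) $$ (i mod n, j mod n) else 0))"

end

theory Submission
  imports Defs "HOL-Analysis.FPS_Convergence" "HOL-Analysis.Infinite_Sum" "HOL-Computational_Algebra.Polynomial"
begin


lemma double_series_swap:
  fixes x :: "nat \<Rightarrow> nat \<Rightarrow> complex" and d :: "nat \<Rightarrow> nat"
  assumes supp: "\<And>k r. r > d k \<Longrightarrow> x k r = 0"
    and summ: "summable (\<lambda>k. \<Sum>r\<le>d k. norm (x k r))"
  shows "(\<lambda>r. \<Sum>k. x k r) sums (\<Sum>k. \<Sum>r\<le>d k. x k r)"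
proof -
  let ?f = "\<lambda>(k,r). x k r"
  have row_inf: "infsum (\<lambda>r. g k r) UNIV = (\<Sum>r\<le>d k. g k r)" 
    if "\<And>r. r > d k \<Longrightarrow> g k r = 0" for g :: "nat \<Rightarrow> nat \<Rightarrow> 'a::{banach}" and k
  proof -
    have "infsum (\<lambda>r. g k r) UNIV = infsum (\<lambda>r. g k r) {..d k}"
      by (rule infsum_cong_neutral) (use that in auto)
    thus ?thesis by simp
  qed
  have row_abs: "(\<lambda>r. x k r) abs_summable_on UNIV" for k
  proof -
    have "(\<lambda>r. norm (x k r)) summable_on {..d k}" by simp
    thus ?thesis by (rule summable_on_cong_neutral[THEN iffD1, rotated -1]) (use supp in auto)
  qed
  have rows: "(\<lambda>k. infsum (\<lambda>r. norm (x k r)) UNIV) = (\<lambda>k. \<Sum>r\<le>d k. norm (x k r))"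
    by (rule ext, rule row_inf) (use supp in auto)
  have "?f abs_summable_on Sigma UNIV (\<lambda>_. UNIV)"
    unfolding abs_summable_on_Sigma_iff
  proof (intro conjI ballI)
    show "\<And>k. k \<in> UNIV \<Longrightarrow> (\<lambda>r. ?f (k, r)) abs_summable_on UNIV" using row_abs by simp
    show "(\<lambda>k. \<Sum>\<^sub>\<infinity>r\<in>UNIV. norm (?f (k, r))) abs_summable_on UNIV"
      using norm_summable_imp_summable_on[of "\<lambda>k. \<Sum>r\<le>d k. norm (x k r)"] summ
      using fun_cong[OF rows] by (simp add: sum_nonneg)
  qed
  hence fs: "?f summable_on UNIV \<times> UNIV" by (simp add: abs_summable_summable)
  hence fs': "(\<lambda>(k,r). x k r) summable_on UNIV \<times> UNIV" by simp
  have swapped: "(\<lambda>(r,k). x k r) summable_on UNIV \<times> UNIV"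
    using summable_on_swap[of "\<lambda>(k,r). x k r" UNIV UNIV] fs' by simp
  have eq: "infsum (\<lambda>k. infsum (\<lambda>r. x k r) UNIV) UNIV = infsum (\<lambda>r. infsum (\<lambda>k. x k r) UNIV) UNIV"
    by (rule infsum_swap_banach[OF fs'])
  have rs: "(\<lambda>k. infsum (\<lambda>r. x k r) UNIV) summable_on UNIV"
    using summable_on_Sigma_banach[of "\<lambda>k r. x k r" UNIV "\<lambda>_. UNIV"] fs' by simp
  have cs: "(\<lambda>r. infsum (\<lambda>k. x k r) UNIV) summable_on UNIV"
    using summable_on_Sigma_banach[of "\<lambda>r k. x k r" UNIV "\<lambda>_. UNIV"] swapped by simp
  have colk: "(\<lambda>k. x k r) summable_on UNIV" for r
  proof -
    have "(\<lambda>(k,r). x k r) summable_on (\<lambda>k. (k, r)) ` UNIV"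
      by (rule summable_on_subset_banach[OF fs']) auto
    thus ?thesis by (subst (asm) summable_on_reindex) (auto simp: inj_on_def o_def)
  qed
  have col: "infsum (\<lambda>k. x k r) UNIV = (\<Sum>k. x k r)" for r
    using has_sum_imp_sums[OF colk[of r, unfolded summable_iff_has_sum_infsum]] by (simp add: sums_iff)
  have rowv: "infsum (\<lambda>r. x k r) UNIV = (\<Sum>r\<le>d k. x k r)" for k
    by (rule row_inf) (use supp in auto)
  have "(\<lambda>r. infsum (\<lambda>k. x k r) UNIV) sums infsum (\<lambda>r. infsum (\<lambda>k. x k r) UNIV) UNIV"
    using has_sum_imp_sums cs summable_iff_has_sum_infsum by blast
  moreover have "infsum (\<lambda>k. infsum (\<lambda>r. x k r) UNIV) UNIV = (\<Sum>k. \<Sum>r\<le>d k. x k r)"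
    using has_sum_imp_sums[OF rs[unfolded summable_iff_has_sum_infsum]] by (simp add: sums_iff rowv)
  ultimately show ?thesis using eq col by simp
qed



lemma summable_exp_real: "summable (\<lambda>k. (C::real)^k / fact k)"
  using summable_exp[of C] by (simp add: divide_inverse mult.commute)

lemma series_taylor:
  fixes c :: "nat \<Rightarrow> nat \<Rightarrow> complex" and B :: real and N :: nat
  assumes supp: "\<And>k r. r > k * N \<Longrightarrow> c k r = 0"
    and bound: "\<And>k r. norm (c k r) \<le> C * B ^ k" and B0: "B \<ge> 0" and C0: "C \<ge> 0"
  shows "taylor_coeff (\<lambda>z. \<Sum>k. (\<Sum>r\<le>k*N. c k r * z ^ r) / fact k) l = (\<Sum>k. c k l / fact k)"
proof -
  define a where "a r = (\<Sum>k. c k r / fact k)" for r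
  define f where "f z = (\<Sum>k. (\<Sum>r\<le>k*N. c k r * z ^ r) / fact k)" for z :: complex
  have asum: "summable (\<lambda>k. c k r / fact k)" for r
  proof (rule summable_comparison_test'[OF summable_mult[OF summable_exp_real[of B], of C]])
    fix k show "norm (c k r / fact k) \<le> C * (B ^ k / fact k)"
      using bound[of k r] by (simp add: norm_divide divide_right_mono)
  qed
  have sums: "(\<lambda>r. a r * z ^ r) sums f z" for z
  proof -
    define R where "R = max 1 (norm z)"
    have R1: "R \<ge> 1" by (simp add: R_def)
    let ?x = "\<lambda>k r. c k r * z ^ r / fact k"
    have S: "(\<lambda>r. \<Sum>k. ?x k r) sums (\<Sum>k. \<Sum>r\<le>k*N. ?x k r)"
    proof (rule double_series_swap)
      show "\<And>k r. r > k * N \<Longrightarrow> ?x k r = 0" using supp by simp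
      show "summable (\<lambda>k. \<Sum>r\<le>k * N. norm (?x k r))"
      proof (rule summable_comparison_test'[OF summable_mult[OF summable_exp_real[of "B * (2*R)^N"], of C]])
        fix k
        have "(\<Sum>r\<le>k * N. norm (?x k r)) \<le> (\<Sum>r\<le>k * N. C * B^k * R^(k*N) / fact k)"
        proof (rule sum_mono)
          fix r assume r: "r \<in> {..k*N}"
          have "norm z ^ r \<le> R ^ r" by (intro power_mono) (auto simp: R_def)
          also have "R ^ r \<le> R ^ (k*N)" using r R1 by (intro power_increasing) auto
          finally have zr: "norm z ^ r \<le> R ^ (k*N)" .
          have "norm (?x k r) = norm (c k r) * norm z ^ r / fact k"
            by (simp add: norm_mult norm_divide norm_power)
          also have "\<dots> \<le> C * B^k * R^(k*N) / fact k"
            by (intro divide_right_mono mult_mono bound zr) (auto simp: B0 C0)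
          finally show "norm (?x k r) \<le> C * B^k * R^(k*N) / fact k" .
        qed
        also have "\<dots> = real (k*N+1) * (C * B^k * R^(k*N)) / fact k" by simp
        also have "\<dots> \<le> 2^(k*N) * (C * B^k * R^(k*N)) / fact k"
        proof -
          have "real (k*N+1) \<le> 2^(k*N)"
          proof -
            have "k*N < 2^(k*N)" by (rule less_exp)
            hence "k*N+1 \<le> (2::nat)^(k*N)" by linarith
            thus ?thesis by (metis of_nat_le_iff of_nat_numeral of_nat_power)
          qed
          thus ?thesis using B0 R1 C0 by (intro divide_right_mono mult_right_mono) auto
        qed
        also have "\<dots> = C * ((B * (2*R)^N)^k / fact k)"
          by (simp add: power_mult_distrib power_mult[symmetric] mult.commute[of k N] mult_ac)
        finally show "norm (\<Sum>r\<le>k * N. norm (?x k r)) \<le> C * ((B * (2*R)^N)^k / fact k)"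
          by (simp add: sum_nonneg)
      qed
    qed
    have "(\<Sum>k. ?x k r) = a r * z ^ r" for r
      unfolding a_def using suminf_mult2[OF asum[of r], of "z^r"] by (simp add: mult_ac)
    moreover have "(\<Sum>k. \<Sum>r\<le>k*N. ?x k r) = f z"
      unfolding f_def by (simp add: sum_divide_distrib)
    ultimately show ?thesis using S by simp
  qed
  have "f has_fps_expansion Abs_fps a"
    by (rule has_fps_expansionI) (use sums in simp)
  from fps_nth_fps_expansion[OF this, of l]
  show ?thesis unfolding taylor_coeff_def f_def[symmetric] a_def by simp
qed



lemma sum_split_mn: "sum f {0..<m*n} = (\<Sum>s<m. \<Sum>l<n. f (s*n+l))" for f :: "nat \<Rightarrow> 'a::comm_monoid_add"
proof -
  have "sum f {0..<m*n} = (\<Sum>s<m. sum f {s*n..<s*n+n})"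
    using sum.nat_group[of f n m] by (simp add: atLeast0LessThan)
  also have "\<dots> = (\<Sum>s<m. \<Sum>l<n. f (s*n+l))"
  proof (rule sum.cong[OF refl])
    fix s
    have "sum f {0 + s*n..<n + s*n} = sum (\<lambda>i. f (i + s*n)) {0..<n}"
      by (rule sum.shift_bounds_nat_ivl)
    thus "sum f {s*n..<s*n+n} = (\<Sum>l<n. f (s*n+l))"
      by (simp add: add.commute atLeast0LessThan)
  qed
  finally show ?thesis .
qed

lemma pow_mat_Suc': assumes "M \<in> carrier_mat d d" shows "M ^\<^sub>m Suc k = M * M ^\<^sub>m k"
proof (induction k)
  case 0 thus ?case using assms by simp
next
  case (Suc k)
  have "M ^\<^sub>m Suc (Suc k) = (M * M ^\<^sub>m k) * M" using Suc by simp
  also have "\<dots> = M * (M ^\<^sub>m k * M)" using assms by (intro assoc_mult_mat) auto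
  finally show ?case by simp
qed

lemma pow_Suc_vec: assumes "M \<in> carrier_mat d d" "v \<in> carrier_vec d"
  shows "M ^\<^sub>m Suc k *\<^sub>v v = M *\<^sub>v (M ^\<^sub>m k *\<^sub>v v)"
  using assms by (simp only: pow_mat_Suc'[OF assms(1)]) (intro assoc_mult_mat_vec, auto)

definition Apol :: "nat \<Rightarrow> (nat \<Rightarrow> complex mat) \<Rightarrow> nat \<Rightarrow> nat \<Rightarrow> complex poly" where
  "Apol N A j l = (\<Sum>i\<le>N. monom (A i $$ (j,l)) i)"

lemma coeff_Apol: "coeff (Apol N A j l) i = (if i \<le> N then A i $$ (j,l) else 0)"
  unfolding Apol_def by (simp add: coeff_sum)

lemma degree_Apol: "degree (Apol N A j l) \<le> N"
  unfolding Apol_def by (intro degree_sum_le) (auto intro: order.trans[OF degree_monom_le])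

fun Vp :: "nat \<Rightarrow> nat \<Rightarrow> (nat \<Rightarrow> complex mat) \<Rightarrow> complex vec \<Rightarrow> nat \<Rightarrow> nat \<Rightarrow> complex poly" where
  "Vp n N A u0 0 j = [:u0 $ j:]"
| "Vp n N A u0 (Suc k) j = (\<Sum>l<n. Vp n N A u0 k l * Apol N A j l)"

lemma degree_Vp: "degree (Vp n N A u0 k j) \<le> k * N"
proof (induction k arbitrary: j)
  case 0 thus ?case by simp
next
  case (Suc k)
  show ?case unfolding Vp.simps
  proof (intro degree_sum_le)
    fix l
    have "degree (Vp n N A u0 k l * Apol N A j l) \<le> degree (Vp n N A u0 k l) + degree (Apol N A j l)"
      by (rule degree_mult_le)
    also have "\<dots> \<le> k * N + N" using Suc degree_Apol by (intro add_mono) auto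
    finally show "degree (Vp n N A u0 k l * Apol N A j l) \<le> Suc k * N" by simp
  qed auto
qed

lemma Apoly_carrier: "Apoly n N A eps \<in> carrier_mat n n"
  unfolding Apoly_def by simp

lemma poly_Apol: "j < n \<Longrightarrow> l < n \<Longrightarrow> poly (Apol N A j l) eps = Apoly n N A eps $$ (j,l)"
  unfolding Apol_def Apoly_def by (simp add: poly_sum poly_monom mult.commute)

lemma poly_Vp:
  assumes "u0 \<in> carrier_vec n" "j < n"
  shows "(Apoly n N A eps ^\<^sub>m k *\<^sub>v u0) $ j = poly (Vp n N A u0 k j) eps"
  using assms(2)
proof (induction k arbitrary: j)
  case 0 thus ?case using assms by (simp add: Apoly_def)
next
  case (Suc k)
  let ?M = "Apoly n N A eps"
  have "(?M ^\<^sub>m Suc k *\<^sub>v u0) $ j = (?M *\<^sub>v (?M ^\<^sub>m k *\<^sub>v u0)) $ j"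
    using pow_Suc_vec[OF Apoly_carrier assms(1)] by simp
  also have "\<dots> = (\<Sum>l\<in>{0..<n}. ?M $$ (j,l) * (?M ^\<^sub>m k *\<^sub>v u0) $ l)"
    using Suc.prems by (simp add: scalar_prod_def Apoly_def)
  also have "\<dots> = (\<Sum>l<n. poly (Vp n N A u0 k l) eps * poly (Apol N A j l) eps)"
    by (rule sum.cong) (use Suc in \<open>auto simp: poly_Apol mult.commute\<close>)
  also have "\<dots> = poly (Vp n N A u0 (Suc k) j) eps"
    by (simp add: poly_sum)
  finally show ?case .
qed



lemma rev_sum: "(\<Sum>s\<le>r. g (r-s)) = (\<Sum>i\<le>(r::nat). g i)" for g :: "nat \<Rightarrow> 'a::comm_monoid_add"
  using sum.nat_diff_reindex[of g "Suc r"] by (simp add: lessThan_Suc_atMost)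

lemma bound_Vp:
  assumes "j < n"
  shows "norm (coeff (Vp n N A u0 k j) r) \<le> (\<Sum>j<n. norm (u0 $ j)) * (\<Sum>j<n. \<Sum>l<n. \<Sum>i\<le>N. norm (A i $$ (j,l))) ^ k"
  using assms
proof (induction k arbitrary: j r)
  case 0
  show ?case
  proof (cases r)
    case 0
    thus ?thesis using "0.prems" by (simp, intro member_le_sum[where f="\<lambda>j. cmod (u0 $ j)"]) auto
  next
    case (Suc r') thus ?thesis by (simp add: sum_nonneg)
  qed
next
  case (Suc k)
  define \<mu> where "\<mu> = (\<Sum>j<n. norm (u0 $ j))"
  define \<beta> where "\<beta> = (\<Sum>j<n. \<Sum>l<n. \<Sum>i\<le>N. norm (A i $$ (j,l)))"
  have \<mu>0: "\<mu> \<ge> 0" and \<beta>0: "\<beta> \<ge> 0" unfolding \<mu>_def \<beta>_def by (auto intro!: sum_nonneg)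
  have IH: "\<And>l s. l < n \<Longrightarrow> norm (coeff (Vp n N A u0 k l) s) \<le> \<mu> * \<beta> ^ k"
    using Suc.IH unfolding \<mu>_def \<beta>_def by blast
  have inner: "(\<Sum>s\<le>r. norm (coeff (Apol N A j l) (r - s))) \<le> (\<Sum>i\<le>N. norm (A i $$ (j,l)))" for l
  proof -
    have "(\<Sum>s\<le>r. norm (coeff (Apol N A j l) (r - s))) = (\<Sum>i\<le>r. norm (coeff (Apol N A j l) i))"
      by (rule rev_sum)
    also have "\<dots> = (\<Sum>i\<in>{..r} \<inter> {..N}. norm (coeff (Apol N A j l) i))"
      by (rule sum.mono_neutral_right) (auto simp: coeff_Apol)
    also have "\<dots> = (\<Sum>i\<in>{..r} \<inter> {..N}. norm (A i $$ (j,l)))"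
      by (rule sum.cong) (auto simp: coeff_Apol)
    also have "\<dots> \<le> (\<Sum>i\<le>N. norm (A i $$ (j,l)))"
      by (rule sum_mono2) auto
    finally show ?thesis .
  qed
  have "norm (coeff (Vp n N A u0 (Suc k) j) r)
      = norm (\<Sum>l<n. \<Sum>s\<le>r. coeff (Vp n N A u0 k l) s * coeff (Apol N A j l) (r - s))"
    by (simp add: coeff_sum coeff_mult)
  also have "\<dots> \<le> (\<Sum>l<n. \<Sum>s\<le>r. norm (coeff (Vp n N A u0 k l) s) * norm (coeff (Apol N A j l) (r - s)))"
    by (rule order.trans[OF norm_sum sum_mono], rule order.trans[OF norm_sum sum_mono]) (simp add: norm_mult)
  also have "\<dots> \<le> (\<Sum>l<n. \<Sum>s\<le>r. \<mu> * \<beta> ^ k * norm (coeff (Apol N A j l) (r - s)))"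
    by (intro sum_mono mult_right_mono IH) auto
  also have "\<dots> = \<mu> * \<beta> ^ k * (\<Sum>l<n. \<Sum>s\<le>r. norm (coeff (Apol N A j l) (r - s)))"
    by (simp add: sum_distrib_left)
  also have "\<dots> \<le> \<mu> * \<beta> ^ k * (\<Sum>l<n. \<Sum>i\<le>N. norm (A i $$ (j,l)))"
    by (intro mult_left_mono sum_mono inner) (use \<mu>0 \<beta>0 in auto)
  also have "(\<Sum>l<n. \<Sum>i\<le>N. norm (A i $$ (j,l))) \<le> \<beta>"
    unfolding \<beta>_def using Suc.prems
    by (intro member_le_sum[where f="\<lambda>j. \<Sum>l<n. \<Sum>i\<le>N. norm (A i $$ (j,l))"]) (auto intro!: sum_nonneg)
  hence "\<mu> * \<beta> ^ k * (\<Sum>l<n. \<Sum>i\<le>N. norm (A i $$ (j,l))) \<le> \<mu> * \<beta> ^ k * \<beta>"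
    by (intro mult_left_mono) (use \<mu>0 \<beta>0 in auto)
  finally show ?case unfolding \<mu>_def \<beta>_def by (simp add: mult_ac)
qed

lemma pow_entry_bound:
  fixes M :: "complex mat"
  assumes M: "M \<in> carrier_mat d d" and ab: "a < d" "b < d"
  shows "norm ((M ^\<^sub>m k) $$ (a,b)) \<le> (d * (\<Sum>a<d. \<Sum>b<d. norm (M $$ (a,b)))) ^ k"
  using ab
proof (induction k arbitrary: a b)
  case 0 thus ?case using M by auto
next
  case (Suc k)
  define \<alpha> where "\<alpha> = (\<Sum>a<d. \<Sum>b<d. norm (M $$ (a,b)))"
  have \<alpha>0: "\<alpha> \<ge> 0" unfolding \<alpha>_def by (auto intro!: sum_nonneg)
  have ent: "norm (M $$ (c,b)) \<le> \<alpha>" if "c < d" "b < d" for c b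
  proof -
    have "norm (M $$ (c,b)) \<le> (\<Sum>b<d. norm (M $$ (c,b)))"
      using that by (intro member_le_sum[where f="\<lambda>b. norm (M $$ (c,b))"]) auto
    also have "\<dots> \<le> \<alpha>" unfolding \<alpha>_def
      using that by (intro member_le_sum[where f="\<lambda>c. \<Sum>b<d. norm (M $$ (c,b))"]) (auto intro!: sum_nonneg)
    finally show ?thesis .
  qed
  have "(M ^\<^sub>m Suc k) $$ (a,b) = (\<Sum>c\<in>{0..<d}. (M ^\<^sub>m k) $$ (a,c) * M $$ (c,b))"
    using Suc.prems M by (simp add: scalar_prod_def)
  also have "norm \<dots> \<le> (\<Sum>c\<in>{0..<d}. (d*\<alpha>)^k * \<alpha>)"
    by (rule order.trans[OF norm_sum sum_mono])
       (use Suc ent \<alpha>0 in \<open>auto simp: norm_mult \<alpha>_def intro!: mult_mono\<close>)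
  also have "\<dots> = (d*\<alpha>)^Suc k" by (simp add: mult_ac)
  finally show ?case unfolding \<alpha>_def .
qed

lemma mat_exp_vec:
  fixes M :: "complex mat"
  assumes M: "M \<in> carrier_mat d d" and v: "v \<in> carrier_vec d" and i: "i < d"
  shows "(mat_exp M *\<^sub>v v) $ i = (\<Sum>k. (M ^\<^sub>m k *\<^sub>v v) $ i / fact k)"
proof -
  define \<alpha> where "\<alpha> = (\<Sum>a<d. \<Sum>b<d. norm (M $$ (a,b)))"
  have summ: "summable (\<lambda>k. (M ^\<^sub>m k) $$ (a,b) / fact k)" if "a < d" "b < d" for a b
  proof (rule summable_comparison_test'[OF summable_exp_real[of "d*\<alpha>"]])
    fix k show "norm ((M ^\<^sub>m k) $$ (a,b) / fact k) \<le> (d*\<alpha>)^k / fact k"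
      using pow_entry_bound[OF M that, of k] unfolding \<alpha>_def
      by (simp add: norm_divide divide_right_mono)
  qed
  have "(mat_exp M *\<^sub>v v) $ i = (\<Sum>c\<in>{0..<d}. (\<Sum>k. (M ^\<^sub>m k) $$ (i,c) / fact k) * v $ c)"
    using M v i by (simp add: mat_exp_def scalar_prod_def)
  also have "\<dots> = (\<Sum>c\<in>{0..<d}. \<Sum>k. (M ^\<^sub>m k) $$ (i,c) / fact k * v $ c)"
    by (rule sum.cong[OF refl], rule suminf_mult2, rule summ) (use i in auto)
  also have "\<dots> = (\<Sum>k. \<Sum>c\<in>{0..<d}. (M ^\<^sub>m k) $$ (i,c) / fact k * v $ c)"
    by (rule suminf_sum[symmetric], rule summable_mult2, rule summ) (use i in auto)
  also have "\<dots> = (\<Sum>k. (M ^\<^sub>m k *\<^sub>v v) $ i / fact k)"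
    using M v i by (simp add: scalar_prod_def sum_divide_distrib mult_ac)
  finally show ?thesis .
qed



lemma L_carrier: "L_mat m n N A \<in> carrier_mat (m*n) (m*n)"
  unfolding L_mat_def by simp

lemma stack_carrier: "stack_vec m n x \<in> carrier_vec (m*n)"
  unfolding stack_vec_def by simp

lemma L_pow:
  assumes u0: "u0 \<in> carrier_vec n"
  shows "L_mat m n N A ^\<^sub>m k *\<^sub>v stack_vec m n (\<lambda>l. if l = 0 then u0 else 0\<^sub>v n)
       = vec (m*n) (\<lambda>i. coeff (Vp n N A u0 k (i mod n)) (i div n))"
proof (induction k)
  case 0
  show ?case
  proof (rule eq_vecI)
    fix i assume i: "i < dim_vec (vec (m*n) (\<lambda>i. coeff (Vp n N A u0 0 (i mod n)) (i div n)))"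
    hence i': "i < m*n" by simp
    hence n0: "n > 0" by (cases n) auto
    have "(L_mat m n N A ^\<^sub>m 0 *\<^sub>v stack_vec m n (\<lambda>l. if l = 0 then u0 else 0\<^sub>v n)) $ i
        = (if i div n = 0 then u0 else 0\<^sub>v n) $ (i mod n)"
      using i' stack_carrier[of m n] by (simp add: L_mat_def stack_vec_def)
    also have "\<dots> = coeff (Vp n N A u0 0 (i mod n)) (i div n)"
      using n0 by (cases "i div n") auto
    finally show "(L_mat m n N A ^\<^sub>m 0 *\<^sub>v stack_vec m n (\<lambda>l. if l = 0 then u0 else 0\<^sub>v n)) $ i
        = vec (m*n) (\<lambda>i. coeff (Vp n N A u0 0 (i mod n)) (i div n)) $ i" using i' by simp
  qed (simp add: L_mat_def)
next
  case (Suc k)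
  let ?L = "L_mat m n N A" and ?u = "stack_vec m n (\<lambda>l. if l = 0 then u0 else 0\<^sub>v n)"
  let ?W = "\<lambda>k. vec (m*n) (\<lambda>i. coeff (Vp n N A u0 k (i mod n)) (i div n))"
  have "?L ^\<^sub>m Suc k *\<^sub>v ?u = ?L *\<^sub>v ?W k"
    using pow_Suc_vec[OF L_carrier stack_carrier] Suc by simp
  also have "\<dots> = ?W (Suc k)"
  proof (rule eq_vecI)
    fix i assume "i < dim_vec (?W (Suc k))"
    hence i: "i < m*n" by simp
    hence n0: "n > 0" by (cases n) auto
    define r where "r = i div n"
    define j where "j = i mod n"
    have rm: "r < m" using i n0 unfolding r_def by (simp add: less_mult_imp_div_less)
    have jn: "j < n" using n0 unfolding j_def by simp
    have dm: "(s*n+l) div n = s" "(s*n+l) mod n = l" if "l < n" for s l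
      using that n0 by auto
    have "(?L *\<^sub>v ?W k) $ i = (\<Sum>i'\<in>{0..<m*n}. ?L $$ (i,i') * ?W k $ i')"
      using i by (simp add: scalar_prod_def L_mat_def)
    also have "\<dots> = (\<Sum>s<m. \<Sum>l<n. ?L $$ (i, s*n+l) * ?W k $ (s*n+l))"
      by (rule sum_split_mn)
    also have "\<dots> = (\<Sum>s<m. \<Sum>l<n. (if s \<le> r \<and> r - s \<le> min (m-1) N then A (r-s) $$ (j,l) else 0)
                        * coeff (Vp n N A u0 k l) s)"
    proof (intro sum.cong refl)
      fix s l assume s: "s \<in> {..<m}" and l: "l \<in> {..<n}"
      have sl: "s*n+l < m*n"
      proof -
        have "s*n+l < s*n+n" using l by simp
        also have "\<dots> = Suc s * n" by simp
        also have "\<dots> \<le> m*n" using s by (intro mult_right_mono) auto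
        finally show ?thesis .
      qed
      show "?L $$ (i, s*n+l) * ?W k $ (s*n+l) = (if s \<le> r \<and> r - s \<le> min (m-1) N then A (r-s) $$ (j,l) else 0)
                        * coeff (Vp n N A u0 k l) s"
        using i sl l dm[of l s] unfolding L_mat_def r_def j_def by (simp add: Let_def)
    qed
    also have "\<dots> = (\<Sum>l<n. \<Sum>s<m. (if s \<le> r \<and> r - s \<le> min (m-1) N then A (r-s) $$ (j,l) else 0)
                        * coeff (Vp n N A u0 k l) s)"
      by (rule sum.swap)
    also have "\<dots> = (\<Sum>l<n. \<Sum>s\<le>r. coeff (Vp n N A u0 k l) s * coeff (Apol N A j l) (r - s))"
    proof (rule sum.cong[OF refl])
      fix l
      have "(\<Sum>s<m. (if s \<le> r \<and> r - s \<le> min (m-1) N then A (r-s) $$ (j,l) else 0) * coeff (Vp n N A u0 k l) s)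
          = (\<Sum>s\<le>r. (if s \<le> r \<and> r - s \<le> min (m-1) N then A (r-s) $$ (j,l) else 0) * coeff (Vp n N A u0 k l) s)"
        by (rule sum.mono_neutral_right) (use rm in auto)
      also have "\<dots> = (\<Sum>s\<le>r. coeff (Vp n N A u0 k l) s * coeff (Apol N A j l) (r - s))"
        by (rule sum.cong[OF refl]) (use rm in \<open>auto simp: coeff_Apol\<close>)
      finally show "(\<Sum>s<m. (if s \<le> r \<and> r - s \<le> min (m-1) N then A (r-s) $$ (j,l) else 0) * coeff (Vp n N A u0 k l) s)
          = (\<Sum>s\<le>r. coeff (Vp n N A u0 k l) s * coeff (Apol N A j l) (r - s))" .
    qed
    also have "\<dots> = coeff (Vp n N A u0 (Suc k) j) r"
      by (simp add: coeff_sum coeff_mult)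
    also have "\<dots> = ?W (Suc k) $ i" using i unfolding r_def j_def by simp
    finally show "(?L *\<^sub>v ?W k) $ i = ?W (Suc k) $ i" .
  qed (simp add: L_mat_def)
  finally show ?case .
qed



theorem mainTheorem1:
  fixes n N m :: nat and A :: "nat \<Rightarrow> complex mat" and u0 :: "complex vec" and t :: real
  assumes "n \<ge> 1" and "N \<ge> 1"
    and "\<And>i. i \<le> N \<Longrightarrow> A i \<in> carrier_mat n n"
    and "u0 \<in> carrier_vec n"
    and "m \<ge> 1"
  shows "stack_vec m n (\<lambda>l. c_coeff n N A u0 l t)
         = mat_exp (complex_of_real t \<cdot>\<^sub>m L_mat m n N A)
             *\<^sub>v stack_vec m n (\<lambda>l. if l = 0 then u0 else 0\<^sub>v n)"
proof -
  note carr = assms(3) and u0 = assms(4)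
  define B where "B i = complex_of_real t \<cdot>\<^sub>m A i" for i
  have ApB: "complex_of_real t \<cdot>\<^sub>m Apoly n N A eps = Apoly n N B eps" for eps
  proof (rule eq_matI)
    fix a b assume ab: "a < dim_row (Apoly n N B eps)" "b < dim_col (Apoly n N B eps)"
    hence "a < n" "b < n" by (auto simp: Apoly_def)
    thus "(complex_of_real t \<cdot>\<^sub>m Apoly n N A eps) $$ (a, b) = Apoly n N B eps $$ (a, b)"
      using carr by (simp add: Apoly_def B_def sum_distrib_left mult_ac, intro sum.cong refl)
        (subst index_smult_mat, auto)
  qed (auto simp: Apoly_def)
  have LB: "complex_of_real t \<cdot>\<^sub>m L_mat m n N A = L_mat m n N B"
  proof (rule eq_matI)
    fix a b assume ab: "a < dim_row (L_mat m n N B)" "b < dim_col (L_mat m n N B)"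
    hence ab': "a < m*n" "b < m*n" by (auto simp: L_mat_def)
    hence n0: "n > 0" by (cases n) auto
    show "(complex_of_real t \<cdot>\<^sub>m L_mat m n N A) $$ (a, b) = L_mat m n N B $$ (a, b)"
    proof -
      have sm: "\<And>d. d \<le> N \<Longrightarrow> (complex_of_real t \<cdot>\<^sub>m A d) $$ (a mod n, b mod n) = complex_of_real t * A d $$ (a mod n, b mod n)"
      proof -
        fix d assume "d \<le> N"
        hence "dim_row (A d) = n" "dim_col (A d) = n" using carr by auto
        thus "(complex_of_real t \<cdot>\<^sub>m A d) $$ (a mod n, b mod n) = complex_of_real t * A d $$ (a mod n, b mod n)"
          using n0 by (subst index_smult_mat) auto
      qed
      show ?thesis using ab' n0 by (simp add: L_mat_def B_def Let_def sm)
    qed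
  qed (auto simp: L_mat_def)
  show ?thesis
  proof (rule eq_vecI)
    fix i assume "i < dim_vec (mat_exp (complex_of_real t \<cdot>\<^sub>m L_mat m n N A)
             *\<^sub>v stack_vec m n (\<lambda>l. if l = 0 then u0 else 0\<^sub>v n))"
    hence i: "i < m*n" by (simp add: mat_exp_def L_mat_def)
    hence n0: "n > 0" by (cases n) auto
    define r where "r = i div n"
    define j where "j = i mod n"
    have jn: "j < n" using n0 unfolding j_def by simp
    define c where "c k r = coeff (Vp n N B u0 k j) r" for k r
    have poly_eq: "poly (Vp n N B u0 k j) eps = (\<Sum>r\<le>k*N. c k r * eps ^ r)" for k eps
    proof -
      have "poly (Vp n N B u0 k j) eps = (\<Sum>r\<le>degree (Vp n N B u0 k j). c k r * eps ^ r)"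
        unfolding c_def by (rule poly_altdef)
      also have "\<dots> = (\<Sum>r\<le>k*N. c k r * eps ^ r)"
        by (rule sum.mono_neutral_left) (use degree_Vp[of n N B u0 k j] in \<open>auto simp: c_def coeff_eq_0\<close>)
      finally show ?thesis .
    qed
    have ufun: "(\<lambda>eps. u_sol n N A u0 t eps $ j) = (\<lambda>eps. \<Sum>k. (\<Sum>r\<le>k*N. c k r * eps ^ r) / fact k)"
    proof
      fix eps
      have "u_sol n N A u0 t eps $ j = (mat_exp (Apoly n N B eps) *\<^sub>v u0) $ j"
        unfolding u_sol_def ApB ..
      also have "\<dots> = (\<Sum>k. (Apoly n N B eps ^\<^sub>m k *\<^sub>v u0) $ j / fact k)"
        by (rule mat_exp_vec[OF Apoly_carrier u0 jn])
      also have "\<dots> = (\<Sum>k. (\<Sum>r\<le>k*N. c k r * eps ^ r) / fact k)"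
        by (simp add: poly_Vp[OF u0 jn] poly_eq)
      finally show "u_sol n N A u0 t eps $ j = (\<Sum>k. (\<Sum>r\<le>k*N. c k r * eps ^ r) / fact k)" .
    qed
    have supp: "\<And>k r. r > k * N \<Longrightarrow> c k r = 0"
      unfolding c_def using degree_Vp[of n N B u0] by (meson coeff_eq_0 le_less_trans)
    have bnd: "\<And>k r. norm (c k r) \<le> (\<Sum>j<n. norm (u0 $ j)) * (\<Sum>j<n. \<Sum>l<n. \<Sum>i\<le>N. norm (B i $$ (j,l))) ^ k"
      unfolding c_def by (rule bound_Vp[OF jn])
    have lhs: "stack_vec m n (\<lambda>l. c_coeff n N A u0 l t) $ i = (\<Sum>k. c k r / fact k)"
    proof -
      have "stack_vec m n (\<lambda>l. c_coeff n N A u0 l t) $ i = taylor_coeff (\<lambda>eps. u_sol n N A u0 t eps $ j) r"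
        using i jn unfolding stack_vec_def c_coeff_def r_def j_def by simp
      also have "\<dots> = (\<Sum>k. c k r / fact k)"
        unfolding ufun by (rule series_taylor[OF supp bnd]) (auto intro!: sum_nonneg)
      finally show ?thesis .
    qed
    have rhs: "(mat_exp (complex_of_real t \<cdot>\<^sub>m L_mat m n N A)
             *\<^sub>v stack_vec m n (\<lambda>l. if l = 0 then u0 else 0\<^sub>v n)) $ i = (\<Sum>k. c k r / fact k)"
      unfolding LB
      by (subst mat_exp_vec[OF L_carrier stack_carrier i])
         (simp add: L_pow[OF u0] i c_def r_def j_def)
    show "stack_vec m n (\<lambda>l. c_coeff n N A u0 l t) $ i = (mat_exp (complex_of_real t \<cdot>\<^sub>m L_mat m n N A)
             *\<^sub>v stack_vec m n (\<lambda>l. if l = 0 then u0 else 0\<^sub>v n)) $ i"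
      using lhs rhs by simp
  qed (simp add: stack_vec_def mat_exp_def L_mat_def)
qed

end
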